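(* Let $a=\alpha_0A_0+\alpha_1A_1+\alpha_2A_2+\alpha_3A_3$ with $\alpha_i\in K[X]$, where $A_0=\begin{pmatrix} h_1&0\\ 0&h_1\end{pmatrix}$, $A_1=\begin{pmatrix} 0&0\\ 0&h_1\end{pmatrix}$, $A_2=\begin{pmatrix} 0&h_2\\ -h_3&h_4\end{pmatrix}$, $A_3=\begin{pmatrix} h_4&0\\ 0&h_4\end{pmatrix}$. If $a\in F$, then $a$ is strongly central in $F$.
   Context: $K$ is an infinite field of characteristic different from 2. Let $X=\{x_1,x_2,x_1',x_2'\}$ and $Y=\{y_1,y_2,y_1',y_2'\}$, and let $K[X;Y]\cong K[X]\otimes_K E(Y)$ be the free supercommutative algebra: the $x$'s are even commuting variables, the $y$'s are odd pairwise anticommuting variables, and $E(Y)$ is the Grassmann algebra on the vector space with basis $Y$. Put $C_1=\begin{pmatrix} x_1&y_1\\ y_1'&x_1'\end{pmatrix}$, $C_2=\begin{pmatrix} x_2&y_2\\ y_2'&x_2'\end{pmatrix}$, and let $F=K[C_1,C_2]$ be the unital $K$-subalgebra of $M_2(K[X;Y])$ generated by $C_1,C_2$; elements of $K[X]$ act on matrices as scalars. Define $h_1=y_1y_2y_1'y_2'$, $h_2=y_1y_2\big(y_1'(x_2'-x_2)-y_2'(x_1'-x_1)\big)$, $h_3=y_1'y_2'\big(y_1(x_2'-x_2)-y_2(x_1'-x_1)\big)$, $h_4=\big(y_1'(x_2'-x_2)-y_2'(x_1'-x_1)\big)\big(y_1(x_2'-x_2)-y_2(x_1'-x_1)\big)$.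 An element $a\in F$ is called strongly central if $a$ is central in $F$ and $ab$ is central in $F$ for every $b\in F$. *)

theory Defs
  imports Main "HOL-Library.Poly_Mapping"
begin

text \<open>K[X]: commutative polynomials over 'k in the even variables, indexed by nat:
  x1 = 0, x2 = 1, x1' = 2, x2' = 3.  A monomial is an exponent vector nat =>0 nat.\<close>
type_synonym 'k xpoly = "(nat \<Rightarrow>\<^sub>0 nat) \<Rightarrow>\<^sub>0 'k"

definition xvar :: "nat \<Rightarrow> 'k::comm_ring_1 xpoly" where
  "xvar i = Poly_Mapping.single (Poly_Mapping.single i 1) 1"

definition xconst :: "'k::comm_ring_1 \<Rightarrow> 'k xpoly" where
  "xconst c = Poly_Mapping.single 0 c"

text \<open>K[X;Y] = K[X] (tensor) E(Y): an element is a function assigning to each finite set S of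
  odd-variable indices (y1 = 0, y2 = 1, y1' = 2, y2' = 3) the K[X]-coefficient of the
  Grassmann monomial y_S (product of the y_i, i in S, in increasing order of i).\<close>
type_synonym 'k sc = "nat set \<Rightarrow> 'k xpoly"

definition sc_carrier :: "'k::comm_ring_1 sc set" where
  "sc_carrier = {f. \<forall>S. \<not> S \<subseteq> {0..3} \<longrightarrow> f S = 0}"

text \<open>Sign of y_A * y_B = sgn A B * y_(A \<union> B) for disjoint A, B.\<close>
definition sgn :: "nat set \<Rightarrow> nat set \<Rightarrow> 'k::comm_ring_1" where
  "sgn A B = (-1) ^ card {(a, b). a \<in> A \<and> b \<in> B \<and> b < a}"

definition sc_add :: "'k::comm_ring_1 sc \<Rightarrow> 'k sc \<Rightarrow> 'k sc" where
  "sc_add f g = (\<lambda>S. f S + g S)"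

definition sc_neg :: "'k::comm_ring_1 sc \<Rightarrow> 'k sc" where
  "sc_neg f = (\<lambda>S. - f S)"

definition sc_sub :: "'k::comm_ring_1 sc \<Rightarrow> 'k sc \<Rightarrow> 'k sc" where
  "sc_sub f g = (\<lambda>S. f S - g S)"

definition sc_zero :: "'k::comm_ring_1 sc" where
  "sc_zero = (\<lambda>S. 0)"

definition sc_mul :: "'k::comm_ring_1 sc \<Rightarrow> 'k sc \<Rightarrow> 'k sc" where
  "sc_mul f g = (\<lambda>S. \<Sum>A\<in>Pow S. sgn A (S - A) * f A * g (S - A))"

definition sc_of :: "'k::comm_ring_1 xpoly \<Rightarrow> 'k sc" where
  "sc_of p = (\<lambda>S. if S = {} then p else 0)"

definition sc_x :: "nat \<Rightarrow> 'k::comm_ring_1 sc" where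
  "sc_x i = sc_of (xvar i)"

definition sc_y :: "nat \<Rightarrow> 'k::comm_ring_1 sc" where
  "sc_y i = (\<lambda>S. if S = {i} then 1 else 0)"

definition sc_scale :: "'k::comm_ring_1 xpoly \<Rightarrow> 'k sc \<Rightarrow> 'k sc" where
  "sc_scale p f = (\<lambda>S. p * f S)"

text \<open>2x2 matrices (a, b, c, d) = [[a, b], [c, d]] over K[X;Y].\<close>
type_synonym 'k mat2 = "'k sc \<times> 'k sc \<times> 'k sc \<times> 'k sc"

definition mat :: "'k::comm_ring_1 sc \<Rightarrow> 'k sc \<Rightarrow> 'k sc \<Rightarrow> 'k sc \<Rightarrow> 'k mat2" where
  "mat a b c d = (a, b, c, d)"

fun m_add :: "'k::comm_ring_1 mat2 \<Rightarrow> 'k mat2 \<Rightarrow> 'k mat2" where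
  "m_add (a, b, c, d) (a', b', c', d') =
     (sc_add a a', sc_add b b', sc_add c c', sc_add d d')"

fun m_mul :: "'k::comm_ring_1 mat2 \<Rightarrow> 'k mat2 \<Rightarrow> 'k mat2" where
  "m_mul (a, b, c, d) (a', b', c', d') =
     (sc_add (sc_mul a a') (sc_mul b c'), sc_add (sc_mul a b') (sc_mul b d'),
      sc_add (sc_mul c a') (sc_mul d c'), sc_add (sc_mul c b') (sc_mul d d'))"

fun m_scale :: "'k::comm_ring_1 xpoly \<Rightarrow> 'k mat2 \<Rightarrow> 'k mat2" where
  "m_scale p (a, b, c, d) = (sc_scale p a, sc_scale p b, sc_scale p c, sc_scale p d)"

definition m_one :: "'k::comm_ring_1 mat2" where
  "m_one = (sc_of 1, sc_zero, sc_zero, sc_of 1)"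

definition C1 :: "'k::comm_ring_1 mat2" where
  "C1 = mat (sc_x 0) (sc_y 0) (sc_y 2) (sc_x 2)"

definition C2 :: "'k::comm_ring_1 mat2" where
  "C2 = mat (sc_x 1) (sc_y 1) (sc_y 3) (sc_x 3)"

inductive_set F_alg :: "'k::comm_ring_1 mat2 set" where
  one: "m_one \<in> F_alg"
| gen1: "C1 \<in> F_alg"
| gen2: "C2 \<in> F_alg"
| add: "a \<in> F_alg \<Longrightarrow> b \<in> F_alg \<Longrightarrow> m_add a b \<in> F_alg"
| mul: "a \<in> F_alg \<Longrightarrow> b \<in> F_alg \<Longrightarrow> m_mul a b \<in> F_alg"
| smul: "a \<in> F_alg \<Longrightarrow> m_scale (xconst c) a \<in> F_alg"

definition central_in_F :: "'k::comm_ring_1 mat2 \<Rightarrow> bool" where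
  "central_in_F a \<longleftrightarrow> a \<in> F_alg \<and> (\<forall>b\<in>F_alg. m_mul a b = m_mul b a)"

definition strongly_central :: "'k::comm_ring_1 mat2 \<Rightarrow> bool" where
  "strongly_central a \<longleftrightarrow> central_in_F a \<and> (\<forall>b\<in>F_alg. central_in_F (m_mul a b))"

definition dx1 :: "'k::comm_ring_1 sc" where "dx1 = sc_sub (sc_x 2) (sc_x 0)"
definition dx2 :: "'k::comm_ring_1 sc" where "dx2 = sc_sub (sc_x 3) (sc_x 1)"

definition h1 :: "'k::comm_ring_1 sc" where
  "h1 = sc_mul (sc_mul (sc_mul (sc_y 0) (sc_y 1)) (sc_y 2)) (sc_y 3)"

definition u' :: "'k::comm_ring_1 sc" where
  "u' = sc_sub (sc_mul (sc_y 2) dx2) (sc_mul (sc_y 3) dx1)"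

definition u :: "'k::comm_ring_1 sc" where
  "u = sc_sub (sc_mul (sc_y 0) dx2) (sc_mul (sc_y 1) dx1)"

definition h2 :: "'k::comm_ring_1 sc" where
  "h2 = sc_mul (sc_mul (sc_y 0) (sc_y 1)) u'"

definition h3 :: "'k::comm_ring_1 sc" where
  "h3 = sc_mul (sc_mul (sc_y 2) (sc_y 3)) u"

definition h4 :: "'k::comm_ring_1 sc" where
  "h4 = sc_mul u' u"

definition A0 :: "'k::comm_ring_1 mat2" where "A0 = mat h1 sc_zero sc_zero h1"
definition A1 :: "'k::comm_ring_1 mat2" where "A1 = mat sc_zero sc_zero sc_zero h1"
definition A2 :: "'k::comm_ring_1 mat2" where "A2 = mat sc_zero h2 (sc_neg h3) h4"
definition A3 :: "'k::comm_ring_1 mat2" where "A3 = mat h4 sc_zero sc_zero h4"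

end

theory Submission
  imports Defs
begin

definition inv :: "nat set \<Rightarrow> nat set \<Rightarrow> nat" where
  "inv A B = card {(a, b). a \<in> A \<and> b \<in> B \<and> b < a}"

lemma sgn_inv: "sgn A B = (-1) ^ inv A B"
  by (simp add: sgn_def inv_def)

lemma fin_pairs: "finite A \<Longrightarrow> finite B \<Longrightarrow> finite {(a, b). a \<in> A \<and> b \<in> B \<and> b < a}"
  by (rule finite_subset[of _ "A \<times> B"]) auto

lemma inv_Un_left:
  assumes "A \<inter> B = {}" "finite A" "finite B" "finite C"
  shows "inv (A \<union> B) C = inv A C + inv B C"
proof -
  have "{(a, b). a \<in> A \<union> B \<and> b \<in> C \<and> b < a} =
        {(a, b). a \<in> A \<and> b \<in> C \<and> b < a} \<union> {(a, b). a \<in> B \<and> b \<in> C \<and> b < a}" by auto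
  moreover have "{(a, b). a \<in> A \<and> b \<in> C \<and> b < a} \<inter> {(a, b). a \<in> B \<and> b \<in> C \<and> b < a} = {}"
    using assms(1) by auto
  ultimately show ?thesis unfolding inv_def
    by (simp add: card_Un_disjoint fin_pairs assms)
qed

lemma inv_Un_right:
  assumes "B \<inter> C = {}" "finite A" "finite B" "finite C"
  shows "inv A (B \<union> C) = inv A B + inv A C"
proof -
  have "{(a, b). a \<in> A \<and> b \<in> B \<union> C \<and> b < a} =
        {(a, b). a \<in> A \<and> b \<in> B \<and> b < a} \<union> {(a, b). a \<in> A \<and> b \<in> C \<and> b < a}" by auto
  moreover have "{(a, b). a \<in> A \<and> b \<in> B \<and> b < a} \<inter> {(a, b). a \<in> A \<and> b \<in> C \<and> b < a} = {}"
    using assms(1) by auto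
  ultimately show ?thesis unfolding inv_def
    by (simp add: card_Un_disjoint fin_pairs assms)
qed

lemma sgn_cocycle:
  assumes "A \<inter> B = {}" "A \<inter> C = {}" "B \<inter> C = {}" "finite A" "finite B" "finite C"
  shows "(sgn (A \<union> B) C * sgn A B :: 'k::comm_ring_1) = sgn A (B \<union> C) * sgn B C"
  using assms by (simp add: sgn_inv inv_Un_left inv_Un_right power_add algebra_simps)

lemma sc_mul_assoc:
  fixes f g h :: "'k::comm_ring_1 sc"
  shows "sc_mul (sc_mul f g) h = sc_mul f (sc_mul g h)"
proof (rule ext)
  fix S :: "nat set"
  show "sc_mul (sc_mul f g) h S = sc_mul f (sc_mul g h) S"
  proof (cases "finite S")
    case False
    then have "infinite (Pow S)" by simp
    thus ?thesis by (simp add: sc_mul_def)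
  next
    case fin: True
    define F where "F = (\<lambda>T A. sgn T (S-T) * sgn A (T-A) * f A * g (T-A) * h (S-T))"
    define G where "G = (\<lambda>A B. sgn A (S-A) * sgn B (S-A-B) * f A * g B * h (S-A-B))"
    have "sc_mul (sc_mul f g) h S = (\<Sum>T\<in>Pow S. \<Sum>A\<in>Pow T. F T A)"
      unfolding sc_mul_def F_def by (rule sum.cong[OF refl]) (simp only: sum_distrib_left sum_distrib_right mult.assoc)
    also have "\<dots> = sum (case_prod F) (SIGMA T:Pow S. Pow T)"
      by (rule sum.Sigma) (use fin finite_subset in auto)
    also have "\<dots> = sum (case_prod G) (SIGMA A:Pow S. Pow (S - A))"
    proof (rule sum.reindex_bij_witness[where i="\<lambda>(A,B). (A \<union> B, A)" and j="\<lambda>(T,A). (A, T - A)"])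
      fix x assume x: "x \<in> (SIGMA T:Pow S. Pow T)"
      obtain T A where xe: "x = (T, A)" by (cases x)
      have AT: "A \<subseteq> T" "T \<subseteq> S" using x xe by auto
      have fT1: "finite T" using finite_subset[OF AT(2) fin] .
      have fT: "finite T" "finite A" using fT1 finite_subset[OF AT(1) fT1] by auto
      have e1: "S - A - (T - A) = S - T" using AT by auto
      have e2: "(T - A) \<union> (S - T) = S - A" using AT by auto
      have e3: "A \<union> (T - A) = T" using AT by auto
      have e4: "A \<union> T = T" using AT by auto
      show "(\<lambda>(A,B). (A \<union> B, A)) ((\<lambda>(T,A). (A, T - A)) x) = x" by (simp add: xe e3 e4)
      show "(\<lambda>(T,A). (A, T - A)) x \<in> (SIGMA A:Pow S. Pow (S - A))" using AT by (auto simp: xe)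
      have c: "(sgn (A \<union> (T-A)) (S-T) * sgn A (T-A) :: 'k xpoly) = sgn A ((T-A) \<union> (S-T)) * sgn (T-A) (S-T)"
        by (rule sgn_cocycle) (use fT fin AT in auto)
      have c2: "(sgn T (S-T) * sgn A (T-A) :: 'k xpoly) = sgn A (S-A) * sgn (T-A) (S-T)"
        using c unfolding e2 e3 .
      have "case_prod G ((\<lambda>(T,A). (A, T - A)) x) = sgn A (S-A) * sgn (T-A) (S-T) * f A * g (T-A) * h (S-T)"
        by (simp only: xe G_def e1 prod.case)
      also have "\<dots> = sgn T (S-T) * sgn A (T-A) * f A * g (T-A) * h (S-T)"
        by (simp only: c2[symmetric])
      also have "\<dots> = case_prod F x" by (simp only: xe F_def prod.case)
      finally show "case_prod G ((\<lambda>(T,A). (A, T - A)) x) = case_prod F x" .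
    next
      fix y assume y: "y \<in> (SIGMA A:Pow S. Pow (S - A))"
      obtain A B where ye: "y = (A, B)" by (cases y)
      show "(\<lambda>(T,A). (A, T - A)) ((\<lambda>(A,B). (A \<union> B, A)) y) = y" using ye y by (auto simp: Diff_triv)
      show "(\<lambda>(A,B). (A \<union> B, A)) y \<in> (SIGMA T:Pow S. Pow T)" using ye y by auto
    qed
    also have "\<dots> = (\<Sum>A\<in>Pow S. \<Sum>B\<in>Pow (S-A). G A B)"
      by (rule sum.Sigma[symmetric]) (use fin finite_subset in auto)
    also have "\<dots> = sc_mul f (sc_mul g h) S"
      unfolding sc_mul_def G_def by (rule sum.cong[OF refl]) (simp only: sum_distrib_left sum_distrib_right mult.assoc mult.left_commute)
    finally show ?thesis .
  qed
qed

lemma sc_add_assoc: "sc_add (sc_add f g) h = sc_add f (sc_add g h)"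
  by (simp add: sc_add_def add.assoc)
lemma sc_add_commute: "sc_add f g = sc_add g f"
  by (simp add: sc_add_def add.commute)
lemma sc_add_left_commute: "sc_add f (sc_add g h) = sc_add g (sc_add f h)"
  by (simp add: sc_add_def add.left_commute)
lemmas sc_add_ac = sc_add_assoc sc_add_commute sc_add_left_commute

lemma sc_add_zero_left[simp]: "sc_add sc_zero f = f"
  by (simp add: sc_add_def sc_zero_def)
lemma sc_add_zero_right[simp]: "sc_add f sc_zero = f"
  by (simp add: sc_add_def sc_zero_def)

lemma sc_mul_add_left: "sc_mul (sc_add f g) h = sc_add (sc_mul f h) (sc_mul g h)"
  by (rule ext) (simp add: sc_mul_def sc_add_def distrib_left distrib_right sum.distrib)
lemma sc_mul_add_right: "sc_mul f (sc_add g h) = sc_add (sc_mul f g) (sc_mul f h)"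
  by (rule ext) (simp add: sc_mul_def sc_add_def distrib_left distrib_right sum.distrib)

lemma sc_mul_scale_left: "sc_mul (sc_scale p f) g = sc_scale p (sc_mul f g)"
  by (rule ext) (simp add: sc_mul_def sc_scale_def sum_distrib_left mult.assoc mult.left_commute)
lemma sc_mul_scale_right: "sc_mul f (sc_scale p g) = sc_scale p (sc_mul f g)"
  by (rule ext) (simp add: sc_mul_def sc_scale_def sum_distrib_left mult.assoc mult.left_commute)
lemma sc_scale_add: "sc_scale p (sc_add f g) = sc_add (sc_scale p f) (sc_scale p g)"
  by (rule ext) (simp add: sc_scale_def sc_add_def distrib_left)

lemma sc_mul_zero_left[simp]: "sc_mul sc_zero f = sc_zero"
  by (rule ext) (simp add: sc_mul_def sc_zero_def)
lemma sc_mul_zero_right[simp]: "sc_mul f sc_zero = sc_zero"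
  by (rule ext) (simp add: sc_mul_def sc_zero_def)

lemma carrier_infinite: "f \<in> sc_carrier \<Longrightarrow> infinite S \<Longrightarrow> f S = 0"
  unfolding sc_carrier_def using finite_subset by fastforce

lemma sgn_empty_left[simp]: "sgn {} B = 1" by (simp add: sgn_def)
lemma sgn_empty_right[simp]: "sgn A {} = 1" by (simp add: sgn_def)

lemma sc_mul_one_left:
  assumes "f \<in> sc_carrier" shows "sc_mul (sc_of 1) f = f"
proof (rule ext)
  fix S :: "nat set"
  show "sc_mul (sc_of 1) f S = f S"
  proof (cases "finite S")
    case False thus ?thesis using carrier_infinite[OF assms] by (simp add: sc_mul_def)
  next
    case True
    have "sc_mul (sc_of 1) f S = (\<Sum>A\<in>Pow S. if A = {} then f S else 0)"
      unfolding sc_mul_def sc_of_def by (rule sum.cong) auto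
    also have "\<dots> = f S" using True by (simp add: sum.delta)
    finally show ?thesis .
  qed
qed

lemma sc_mul_one_right:
  assumes "f \<in> sc_carrier" shows "sc_mul f (sc_of 1) = f"
proof (rule ext)
  fix S :: "nat set"
  show "sc_mul f (sc_of 1) S = f S"
  proof (cases "finite S")
    case False thus ?thesis using carrier_infinite[OF assms] by (simp add: sc_mul_def)
  next
    case True
    have "sc_mul f (sc_of 1) S = (\<Sum>A\<in>Pow S. if A = S then f S else 0)"
      unfolding sc_mul_def sc_of_def by (rule sum.cong) auto
    also have "\<dots> = f S" using True by (simp add: sum.delta)
    finally show ?thesis .
  qed
qed

lemma carrier_add: "f \<in> sc_carrier \<Longrightarrow> g \<in> sc_carrier \<Longrightarrow> sc_add f g \<in> sc_carrier"
  by (simp add: sc_carrier_def sc_add_def)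
lemma carrier_scale: "f \<in> sc_carrier \<Longrightarrow> sc_scale p f \<in> sc_carrier"
  by (simp add: sc_carrier_def sc_scale_def)
lemma carrier_zero: "sc_zero \<in> sc_carrier"
  by (simp add: sc_carrier_def sc_zero_def)
lemma carrier_of: "sc_of p \<in> sc_carrier"
  by (simp add: sc_carrier_def sc_of_def)
lemma carrier_y: "i \<le> 3 \<Longrightarrow> sc_y i \<in> sc_carrier"
  by (simp add: sc_carrier_def sc_y_def)
lemma carrier_mul:
  assumes "f \<in> sc_carrier" "g \<in> sc_carrier" shows "sc_mul f g \<in> sc_carrier"
  unfolding sc_carrier_def mem_Collect_eq
proof (intro allI impI)
  fix S :: "nat set" assume S: "\<not> S \<subseteq> {0..3}"
  have "\<And>A. A \<in> Pow S \<Longrightarrow> sgn A (S - A) * f A * g (S - A) = 0"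
  proof -
    fix A assume "A \<in> Pow S"
    then have "\<not> A \<subseteq> {0..3} \<or> \<not> S - A \<subseteq> {0..3}" using S by auto
    thus "sgn A (S - A) * f A * g (S - A) = 0"
    proof (elim disjE)
      assume "\<not> A \<subseteq> {0..3}"
      then have "f A = 0" using assms(1) unfolding sc_carrier_def by blast
      thus ?thesis by simp
    next
      assume "\<not> S - A \<subseteq> {0..3}"
      then have "g (S - A) = 0" using assms(2) unfolding sc_carrier_def by blast
      thus ?thesis by simp
    qed
  qed
  thus "sc_mul f g S = 0" unfolding sc_mul_def by simp
qed

fun carr :: "'k::comm_ring_1 mat2 \<Rightarrow> bool" where
  "carr (a, b, c, d) = (a \<in> sc_carrier \<and> b \<in> sc_carrier \<and> c \<in> sc_carrier \<and> d \<in> sc_carrier)"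

lemma F_carr: "X \<in> F_alg \<Longrightarrow> carr X"
proof (induction rule: F_alg.induct)
  case one thus ?case by (simp add: m_one_def carrier_of carrier_zero)
next
  case gen1 thus ?case by (simp add: C1_def mat_def sc_x_def carrier_of carrier_y)
next
  case gen2 thus ?case by (simp add: C2_def mat_def sc_x_def carrier_of carrier_y)
next
  case (add a b) thus ?case by (cases a rule: prod_cases4; cases b rule: prod_cases4) (simp add: carrier_add)
next
  case (mul a b) thus ?case by (cases a rule: prod_cases4; cases b rule: prod_cases4) (simp add: carrier_add carrier_mul)
next
  case (smul a c) thus ?case by (cases a rule: prod_cases4) (simp add: carrier_scale)
qed

lemma m_mul_assoc: "m_mul (m_mul X Y) Z = m_mul X (m_mul Y Z)"
  by (cases X rule: prod_cases4; cases Y rule: prod_cases4; cases Z rule: prod_cases4)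
     (simp add: sc_mul_add_left sc_mul_add_right sc_mul_assoc sc_add_ac)

lemma m_mul_add_left: "m_mul (m_add X Y) Z = m_add (m_mul X Z) (m_mul Y Z)"
  by (cases X rule: prod_cases4; cases Y rule: prod_cases4; cases Z rule: prod_cases4)
     (simp add: sc_mul_add_left sc_mul_add_right sc_add_ac)

lemma m_mul_add_right: "m_mul X (m_add Y Z) = m_add (m_mul X Y) (m_mul X Z)"
  by (cases X rule: prod_cases4; cases Y rule: prod_cases4; cases Z rule: prod_cases4)
     (simp add: sc_mul_add_left sc_mul_add_right sc_add_ac)

lemma m_mul_scale_left: "m_mul (m_scale p X) Y = m_scale p (m_mul X Y)"
  by (cases X rule: prod_cases4; cases Y rule: prod_cases4)
     (simp add: sc_mul_scale_left sc_mul_scale_right sc_scale_add)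

lemma m_mul_scale_right: "m_mul X (m_scale p Y) = m_scale p (m_mul X Y)"
  by (cases X rule: prod_cases4; cases Y rule: prod_cases4)
     (simp add: sc_mul_scale_left sc_mul_scale_right sc_scale_add)

lemma m_one_left: "carr X \<Longrightarrow> m_mul m_one X = X"
  by (cases X rule: prod_cases4) (simp add: m_one_def sc_mul_one_left)

lemma m_one_right: "carr X \<Longrightarrow> m_mul X m_one = X"
  by (cases X rule: prod_cases4) (simp add: m_one_def sc_mul_one_right)

lemma F_central:
  fixes a :: "'k::comm_ring_1 mat2"
  assumes aF: "a \<in> F_alg" and c1: "m_mul a C1 = m_mul C1 a" and c2: "m_mul a C2 = m_mul C2 a"
  shows "b \<in> F_alg \<Longrightarrow> m_mul a b = m_mul b a"
proof (induction rule: F_alg.induct)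
  case one thus ?case using F_carr[OF aF] by (simp add: m_one_left m_one_right)
next
  case gen1 thus ?case by (rule c1)
next
  case gen2 thus ?case by (rule c2)
next
  case (add x y) thus ?case by (simp add: m_mul_add_left m_mul_add_right)
next
  case (mul x y)
  have "m_mul a (m_mul x y) = m_mul (m_mul a x) y" by (simp add: m_mul_assoc)
  also have "\<dots> = m_mul x (m_mul a y)" using mul.IH(1) by (simp add: m_mul_assoc)
  also have "\<dots> = m_mul (m_mul x y) a" using mul.IH(2) by (simp add: m_mul_assoc)
  finally show ?case .
next
  case (smul x c) thus ?case by (simp add: m_mul_scale_left m_mul_scale_right)
qed

lemma strongly_central_gen:
  fixes a :: "'k::comm_ring_1 mat2"
  assumes aF: "a \<in> F_alg" and c1: "m_mul a C1 = m_mul C1 a" and c2: "m_mul a C2 = m_mul C2 a"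
    and c12: "m_mul a (m_mul C1 C2) = m_mul a (m_mul C2 C1)"
  shows "strongly_central a"
proof -
  have cen: "\<And>b. b \<in> F_alg \<Longrightarrow> m_mul a b = m_mul b a" using F_central[OF aF c1 c2] .
  have swap: "\<And>x Y. x \<in> F_alg \<Longrightarrow> m_mul a (m_mul x Y) = m_mul x (m_mul a Y)"
  proof -
    fix x Y :: "'k mat2" assume "x \<in> F_alg"
    have "m_mul a (m_mul x Y) = m_mul (m_mul a x) Y" by (simp add: m_mul_assoc)
    also have "\<dots> = m_mul (m_mul x a) Y" using cen[OF \<open>x \<in> F_alg\<close>] by simp
    finally show "m_mul a (m_mul x Y) = m_mul x (m_mul a Y)" by (simp add: m_mul_assoc)
  qed
  have s1: "\<And>x. x \<in> F_alg \<Longrightarrow> m_mul a (m_mul x (m_mul C1 C2)) = m_mul a (m_mul x (m_mul C2 C1))"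
    using swap c12 by simp
  have L2: "\<And>C. C \<in> F_alg \<Longrightarrow>
      (\<forall>x\<in>F_alg. m_mul a (m_mul x (m_mul C1 C)) = m_mul a (m_mul x (m_mul C C1))) \<Longrightarrow>
      (\<forall>x\<in>F_alg. m_mul a (m_mul x (m_mul C2 C)) = m_mul a (m_mul x (m_mul C C2))) \<Longrightarrow>
      b \<in> F_alg \<Longrightarrow> \<forall>x\<in>F_alg. m_mul a (m_mul x (m_mul b C)) = m_mul a (m_mul x (m_mul C b))" for b
  proof -
    fix C :: "'k mat2" assume CF: "C \<in> F_alg"
      and G1: "\<forall>x\<in>F_alg. m_mul a (m_mul x (m_mul C1 C)) = m_mul a (m_mul x (m_mul C C1))"
      and G2: "\<forall>x\<in>F_alg. m_mul a (m_mul x (m_mul C2 C)) = m_mul a (m_mul x (m_mul C C2))"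
    show "b \<in> F_alg \<Longrightarrow> \<forall>x\<in>F_alg. m_mul a (m_mul x (m_mul b C)) = m_mul a (m_mul x (m_mul C b))"
    proof (induction rule: F_alg.induct)
      case one thus ?case using F_carr[OF CF] by (simp add: m_one_left m_one_right)
    next
      case gen1 thus ?case using G1 by simp
    next
      case gen2 thus ?case using G2 by simp
    next
      case (add y z) thus ?case by (simp add: m_mul_add_left m_mul_add_right)
    next
      case (mul y z)
      show ?case
      proof
        fix x :: "'k mat2" assume xF: "x \<in> F_alg"
        have "m_mul a (m_mul x (m_mul (m_mul y z) C)) = m_mul a (m_mul (m_mul x y) (m_mul z C))"
          by (simp add: m_mul_assoc)
        also have "\<dots> = m_mul a (m_mul (m_mul x y) (m_mul C z))"
          using mul.IH(2) F_alg.mul[OF xF mul.hyps(1)] by blast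
        also have "\<dots> = m_mul (m_mul a (m_mul x (m_mul y C))) z"
          by (simp add: m_mul_assoc)
        also have "\<dots> = m_mul (m_mul a (m_mul x (m_mul C y))) z"
          using mul.IH(1) xF by simp
        also have "\<dots> = m_mul a (m_mul x (m_mul C (m_mul y z)))"
          by (simp add: m_mul_assoc)
        finally show "m_mul a (m_mul x (m_mul (m_mul y z) C)) = m_mul a (m_mul x (m_mul C (m_mul y z)))" .
      qed
    next
      case (smul y c) thus ?case by (simp add: m_mul_scale_left m_mul_scale_right)
    qed
  qed
  have G11: "\<forall>x\<in>F_alg. m_mul a (m_mul x (m_mul C1 C1)) = m_mul a (m_mul x (m_mul C1 C1))" by simp
  have G22: "\<forall>x\<in>F_alg. m_mul a (m_mul x (m_mul C2 C2)) = m_mul a (m_mul x (m_mul C2 C2))" by simp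
  have G12: "\<forall>x\<in>F_alg. m_mul a (m_mul x (m_mul C1 C2)) = m_mul a (m_mul x (m_mul C2 C1))" using s1 by blast
  have G21: "\<forall>x\<in>F_alg. m_mul a (m_mul x (m_mul C2 C1)) = m_mul a (m_mul x (m_mul C1 C2))" using s1 by simp
  have P1: "\<And>b. b \<in> F_alg \<Longrightarrow> \<forall>x\<in>F_alg. m_mul a (m_mul x (m_mul b C1)) = m_mul a (m_mul x (m_mul C1 b))"
    using L2[OF F_alg.gen1 G11 G21] by blast
  have P2: "\<And>b. b \<in> F_alg \<Longrightarrow> \<forall>x\<in>F_alg. m_mul a (m_mul x (m_mul b C2)) = m_mul a (m_mul x (m_mul C2 b))"
    using L2[OF F_alg.gen2 G12 G22] by blast
  have L3: "c \<in> F_alg \<Longrightarrow> \<forall>x\<in>F_alg. \<forall>b\<in>F_alg. m_mul a (m_mul x (m_mul b c)) = m_mul a (m_mul x (m_mul c b))" for c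
  proof (induction rule: F_alg.induct)
    case one show ?case
    proof (intro ballI)
      fix x b :: "'k mat2" assume "b \<in> F_alg"
      then have "carr b" by (rule F_carr)
      thus "m_mul a (m_mul x (m_mul b m_one)) = m_mul a (m_mul x (m_mul m_one b))"
        by (simp add: m_one_left m_one_right)
    qed
  next
    case gen1 thus ?case using P1 by simp
  next
    case gen2 thus ?case using P2 by simp
  next
    case (add y z) thus ?case by (simp add: m_mul_add_left m_mul_add_right)
  next
    case (mul c c')
    show ?case
    proof (intro ballI)
      fix x b :: "'k mat2" assume xF: "x \<in> F_alg" and bF: "b \<in> F_alg"
      have "m_mul a (m_mul x (m_mul b (m_mul c c'))) = m_mul (m_mul a (m_mul x (m_mul b c))) c'"
        by (simp add: m_mul_assoc)
      also have "\<dots> = m_mul (m_mul a (m_mul x (m_mul c b))) c'"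
        using mul.IH(1) xF bF by simp
      also have "\<dots> = m_mul a (m_mul (m_mul x c) (m_mul b c'))"
        by (simp add: m_mul_assoc)
      also have "\<dots> = m_mul a (m_mul (m_mul x c) (m_mul c' b))"
        using mul.IH(2) F_alg.mul[OF xF mul.hyps(1)] bF by blast
      also have "\<dots> = m_mul a (m_mul x (m_mul (m_mul c c') b))"
        by (simp add: m_mul_assoc)
      finally show "m_mul a (m_mul x (m_mul b (m_mul c c'))) = m_mul a (m_mul x (m_mul (m_mul c c') b))" .
    qed
  next
    case (smul y c) thus ?case by (simp add: m_mul_scale_left m_mul_scale_right)
  qed
  have comm: "\<And>b c. b \<in> F_alg \<Longrightarrow> c \<in> F_alg \<Longrightarrow> m_mul a (m_mul b c) = m_mul a (m_mul c b)"
  proof -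
    fix b c :: "'k mat2" assume bF: "b \<in> F_alg" and cF: "c \<in> F_alg"
    have "m_mul a (m_mul m_one (m_mul b c)) = m_mul a (m_mul m_one (m_mul c b))"
      using L3[OF cF] F_alg.one bF by blast
    thus "m_mul a (m_mul b c) = m_mul a (m_mul c b)"
      using F_carr[OF F_alg.mul[OF bF cF]] F_carr[OF F_alg.mul[OF cF bF]] by (simp add: m_one_left)
  qed
  show ?thesis unfolding strongly_central_def central_in_F_def
  proof (intro conjI ballI)
    show "a \<in> F_alg" by (rule aF)
    show "\<And>b. b \<in> F_alg \<Longrightarrow> m_mul a b = m_mul b a" by (rule cen)
    fix b :: "'k mat2" assume bF: "b \<in> F_alg"
    show "m_mul a b \<in> F_alg" using F_alg.mul[OF aF bF] .
    fix c :: "'k mat2" assume cF: "c \<in> F_alg"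
    have "m_mul (m_mul a b) c = m_mul a (m_mul c b)" using comm[OF bF cF] by (simp add: m_mul_assoc)
    also have "\<dots> = m_mul (m_mul c a) b" using cen[OF cF] by (simp add: m_mul_assoc[symmetric])
    finally show "m_mul (m_mul a b) c = m_mul c (m_mul a b)" by (simp add: m_mul_assoc)
  qed
qed

definition mono :: "nat set \<Rightarrow> 'k::comm_ring_1 xpoly \<Rightarrow> 'k sc" where
  "mono S c = (\<lambda>T. if T = S then c else 0)"

lemma sgn_insert:
  assumes "a \<notin> A" "finite A" "finite B"
  shows "sgn (insert a A) B = (if even (card (B \<inter> {..<a})) then 1 else -1) * sgn A B"
proof -
  have i1: "inv {a} B = card {b\<in>B. b < a}"
  proof -
    have "{(x, b). x \<in> {a} \<and> b \<in> B \<and> b < x} = (\<lambda>b. (a, b)) ` {b\<in>B. b < a}" by auto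
    thus ?thesis unfolding inv_def by (simp add: card_image inj_on_def)
  qed
  have "inv (insert a A) B = inv ({a} \<union> A) B" by simp
  also have "\<dots> = card {b\<in>B. b < a} + inv A B" using assms by (subst inv_Un_left) (auto simp: i1)
  moreover have "{b\<in>B. b < a} = B \<inter> {..<a}" by auto
  ultimately show ?thesis by (simp add: sgn_inv power_add minus_one_power_iff)
qed

lemma filter_insert_set: "{b. b \<in> insert c B \<and> P b} = (if P c then insert c {b. b \<in> B \<and> P b} else {b. b \<in> B \<and> P b})"
  by auto
lemma filter_empty_set: "{b. b \<in> {} \<and> P b} = {}" by auto

lemma mono_mul:
  assumes "finite A" "finite B"
  shows "sc_mul (mono A p) (mono B q) = (if A \<inter> B = {} then mono (A \<union> B) (sgn A B * p * q) else sc_zero)"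
proof (rule ext)
  fix S :: "nat set"
  show "sc_mul (mono A p) (mono B q) S = (if A \<inter> B = {} then mono (A \<union> B) (sgn A B * p * q) else sc_zero) S"
  proof (cases "finite S")
    case False
    then have "S \<noteq> A \<union> B" using assms by auto
    with False show ?thesis by (simp add: sc_mul_def mono_def sc_zero_def)
  next
    case True
    have "sc_mul (mono A p) (mono B q) S =
          (\<Sum>C\<in>Pow S. if C = A then (if S - A = B then sgn A B * p * q else 0) else 0)"
      unfolding sc_mul_def mono_def by (rule sum.cong) auto
    also have "\<dots> = (if A \<subseteq> S then (if S - A = B then sgn A B * p * q else 0) else 0)"
      using True by (simp add: sum.delta)
    also have "\<dots> = (if A \<inter> B = {} then mono (A \<union> B) (sgn A B * p * q) else sc_zero) S"
      unfolding mono_def sc_zero_def by auto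
    finally show ?thesis .
  qed
qed

lemma sc_y_mono: "sc_y i = mono {i} 1" by (rule ext) (simp add: sc_y_def mono_def)
lemma sc_x_mono: "sc_x i = mono {} (xvar i)" by (rule ext) (simp add: sc_x_def sc_of_def mono_def)
lemma sc_sub_add: "sc_sub f g = sc_add f (sc_neg g)" by (simp add: sc_sub_def sc_add_def sc_neg_def)
lemma sc_neg_add: "sc_neg (sc_add f g) = sc_add (sc_neg f) (sc_neg g)" by (simp add: sc_add_def sc_neg_def)
lemma sc_neg_mono: "sc_neg (mono S c) = mono S (- c)" by (rule ext) (simp add: sc_neg_def mono_def)
lemma sc_neg_zero: "sc_neg sc_zero = sc_zero" by (simp add: sc_neg_def sc_zero_def)
lemma sc_scale_mono: "sc_scale p (mono S c) = mono S (p * c)" by (rule ext) (simp add: sc_scale_def mono_def)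
lemma sc_scale_zero: "sc_scale p sc_zero = sc_zero" by (simp add: sc_scale_def sc_zero_def)

lemmas mono_simps = sc_y_mono sc_x_mono sc_sub_add sc_neg_add sc_neg_mono sc_neg_zero sc_scale_mono sc_scale_zero
  sc_scale_add sc_mul_add_left sc_mul_add_right mono_mul sgn_insert
  sc_mul_zero_left sc_mul_zero_right sc_add_zero_left sc_add_zero_right

lemma sc_add_apply: "sc_add f g T = f T + g T" by (simp add: sc_add_def)
lemma sc_zero_apply: "sc_zero T = 0" by (simp add: sc_zero_def)
lemma mono_out: "\<not> T \<subseteq> {0..3} \<Longrightarrow> S \<subseteq> {0..3} \<Longrightarrow> mono S c T = 0"
  by (auto simp: mono_def)
lemma mono_eval: "T \<subseteq> {0..3} \<Longrightarrow> S \<subseteq> {0..3} \<Longrightarrow>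
  mono S c T = (if (0 \<in> T \<longleftrightarrow> 0 \<in> S) \<and> (1 \<in> T \<longleftrightarrow> 1 \<in> S) \<and> (2 \<in> T \<longleftrightarrow> 2 \<in> S) \<and> (3 \<in> T \<longleftrightarrow> 3 \<in> S) then c else 0)"
proof -
  assume a: "T \<subseteq> {0..3}" "S \<subseteq> {0..3}"
  have "T = S \<longleftrightarrow> (0 \<in> T \<longleftrightarrow> 0 \<in> S) \<and> (1 \<in> T \<longleftrightarrow> 1 \<in> S) \<and> (2 \<in> T \<longleftrightarrow> 2 \<in> S) \<and> (3 \<in> T \<longleftrightarrow> 3 \<in> S)"
  proof
    assume h: "(0 \<in> T \<longleftrightarrow> 0 \<in> S) \<and> (1 \<in> T \<longleftrightarrow> 1 \<in> S) \<and> (2 \<in> T \<longleftrightarrow> 2 \<in> S) \<and> (3 \<in> T \<longleftrightarrow> 3 \<in> S)"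
    show "T = S"
    proof (rule set_eqI)
      fix x show "x \<in> T \<longleftrightarrow> x \<in> S"
      proof (cases "x \<le> 3")
        case True
        then have "x = 0 \<or> x = 1 \<or> x = 2 \<or> x = 3" by auto
        thus ?thesis using h by auto
      next
        case False thus ?thesis using a by auto
      qed
    qed
  qed simp
  thus ?thesis by (simp add: mono_def)
qed

lemma comm_A0_C1: "m_mul (A0 :: 'k::comm_ring_1 mat2) C1 = m_mul C1 A0"
  unfolding A0_def A1_def A2_def A3_def C1_def C2_def mat_def h1_def h2_def h3_def h4_def u_def u'_def dx1_def dx2_def
  apply (simp add: mono_simps)
  apply (((intro conjI)?; rule ext; case_tac "x \<subseteq> {0..3}";
      (case_tac "0 \<in> x"; case_tac "1 \<in> x"; case_tac "2 \<in> x"; case_tac "3 \<in> x")?;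
      simp add: sc_add_apply sc_zero_apply mono_eval mono_out)?)
  done

lemma comm_A0_C2: "m_mul (A0 :: 'k::comm_ring_1 mat2) C2 = m_mul C2 A0"
  unfolding A0_def A1_def A2_def A3_def C1_def C2_def mat_def h1_def h2_def h3_def h4_def u_def u'_def dx1_def dx2_def
  apply (simp add: mono_simps)
  apply (((intro conjI)?; rule ext; case_tac "x \<subseteq> {0..3}";
      (case_tac "0 \<in> x"; case_tac "1 \<in> x"; case_tac "2 \<in> x"; case_tac "3 \<in> x")?;
      simp add: sc_add_apply sc_zero_apply mono_eval mono_out)?)
  done

lemma comm12_A0: "m_mul (A0 :: 'k::comm_ring_1 mat2) (m_mul C1 C2) = m_mul A0 (m_mul C2 C1)"
  unfolding A0_def A1_def A2_def A3_def C1_def C2_def mat_def h1_def h2_def h3_def h4_def u_def u'_def dx1_def dx2_def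
  apply (simp add: mono_simps)
  apply (((intro conjI)?; rule ext; case_tac "x \<subseteq> {0..3}";
      (case_tac "0 \<in> x"; case_tac "1 \<in> x"; case_tac "2 \<in> x"; case_tac "3 \<in> x")?;
      simp add: sc_add_apply sc_zero_apply mono_eval mono_out)?)
  done

lemma comm_A1_C1: "m_mul (A1 :: 'k::comm_ring_1 mat2) C1 = m_mul C1 A1"
  unfolding A0_def A1_def A2_def A3_def C1_def C2_def mat_def h1_def h2_def h3_def h4_def u_def u'_def dx1_def dx2_def
  apply (simp add: mono_simps)
  apply (((intro conjI)?; rule ext; case_tac "x \<subseteq> {0..3}";
      (case_tac "0 \<in> x"; case_tac "1 \<in> x"; case_tac "2 \<in> x"; case_tac "3 \<in> x")?;
      simp add: sc_add_apply sc_zero_apply mono_eval mono_out)?)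
  done

lemma comm_A1_C2: "m_mul (A1 :: 'k::comm_ring_1 mat2) C2 = m_mul C2 A1"
  unfolding A0_def A1_def A2_def A3_def C1_def C2_def mat_def h1_def h2_def h3_def h4_def u_def u'_def dx1_def dx2_def
  apply (simp add: mono_simps)
  apply (((intro conjI)?; rule ext; case_tac "x \<subseteq> {0..3}";
      (case_tac "0 \<in> x"; case_tac "1 \<in> x"; case_tac "2 \<in> x"; case_tac "3 \<in> x")?;
      simp add: sc_add_apply sc_zero_apply mono_eval mono_out)?)
  done

lemma comm12_A1: "m_mul (A1 :: 'k::comm_ring_1 mat2) (m_mul C1 C2) = m_mul A1 (m_mul C2 C1)"
  unfolding A0_def A1_def A2_def A3_def C1_def C2_def mat_def h1_def h2_def h3_def h4_def u_def u'_def dx1_def dx2_def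
  apply (simp add: mono_simps)
  apply (((intro conjI)?; rule ext; case_tac "x \<subseteq> {0..3}";
      (case_tac "0 \<in> x"; case_tac "1 \<in> x"; case_tac "2 \<in> x"; case_tac "3 \<in> x")?;
      simp add: sc_add_apply sc_zero_apply mono_eval mono_out)?)
  done

lemma comm_A2_C1: "m_mul (A2 :: 'k::comm_ring_1 mat2) C1 = m_mul C1 A2"
  unfolding A0_def A1_def A2_def A3_def C1_def C2_def mat_def h1_def h2_def h3_def h4_def u_def u'_def dx1_def dx2_def
  apply (simp add: mono_simps)
  apply (((intro conjI)?; rule ext; case_tac "x \<subseteq> {0..3}";
      (case_tac "0 \<in> x"; case_tac "1 \<in> x"; case_tac "2 \<in> x"; case_tac "3 \<in> x")?;
      simp add: sc_add_apply sc_zero_apply mono_eval mono_out)?)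
  done

lemma comm_A2_C2: "m_mul (A2 :: 'k::comm_ring_1 mat2) C2 = m_mul C2 A2"
  unfolding A0_def A1_def A2_def A3_def C1_def C2_def mat_def h1_def h2_def h3_def h4_def u_def u'_def dx1_def dx2_def
  apply (simp add: mono_simps)
  apply (((intro conjI)?; rule ext; case_tac "x \<subseteq> {0..3}";
      (case_tac "0 \<in> x"; case_tac "1 \<in> x"; case_tac "2 \<in> x"; case_tac "3 \<in> x")?;
      simp add: sc_add_apply sc_zero_apply mono_eval mono_out)?)
  done

lemma comm12_A2: "m_mul (A2 :: 'k::comm_ring_1 mat2) (m_mul C1 C2) = m_mul A2 (m_mul C2 C1)"
  unfolding A0_def A1_def A2_def A3_def C1_def C2_def mat_def h1_def h2_def h3_def h4_def u_def u'_def dx1_def dx2_def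
  apply (simp add: mono_simps)
  apply (((intro conjI)?; rule ext; case_tac "x \<subseteq> {0..3}";
      (case_tac "0 \<in> x"; case_tac "1 \<in> x"; case_tac "2 \<in> x"; case_tac "3 \<in> x")?;
      simp add: sc_add_apply sc_zero_apply mono_eval mono_out)?)
  done

lemma comm_A3_C1: "m_mul (A3 :: 'k::comm_ring_1 mat2) C1 = m_mul C1 A3"
  unfolding A0_def A1_def A2_def A3_def C1_def C2_def mat_def h1_def h2_def h3_def h4_def u_def u'_def dx1_def dx2_def
  apply (simp add: mono_simps)
  apply (((intro conjI)?; rule ext; case_tac "x \<subseteq> {0..3}";
      (case_tac "0 \<in> x"; case_tac "1 \<in> x"; case_tac "2 \<in> x"; case_tac "3 \<in> x")?;
      simp add: sc_add_apply sc_zero_apply mono_eval mono_out)?)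
  done

lemma comm_A3_C2: "m_mul (A3 :: 'k::comm_ring_1 mat2) C2 = m_mul C2 A3"
  unfolding A0_def A1_def A2_def A3_def C1_def C2_def mat_def h1_def h2_def h3_def h4_def u_def u'_def dx1_def dx2_def
  apply (simp add: mono_simps)
  apply (((intro conjI)?; rule ext; case_tac "x \<subseteq> {0..3}";
      (case_tac "0 \<in> x"; case_tac "1 \<in> x"; case_tac "2 \<in> x"; case_tac "3 \<in> x")?;
      simp add: sc_add_apply sc_zero_apply mono_eval mono_out)?)
  done

lemma comm12_A3: "m_mul (A3 :: 'k::comm_ring_1 mat2) (m_mul C1 C2) = m_mul A3 (m_mul C2 C1)"
  unfolding A0_def A1_def A2_def A3_def C1_def C2_def mat_def h1_def h2_def h3_def h4_def u_def u'_def dx1_def dx2_def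
  apply (simp add: mono_simps)
  apply (((intro conjI)?; rule ext; case_tac "x \<subseteq> {0..3}";
      (case_tac "0 \<in> x"; case_tac "1 \<in> x"; case_tac "2 \<in> x"; case_tac "3 \<in> x")?;
      simp add: sc_add_apply sc_zero_apply mono_eval mono_out)?)
  done


theorem lemma5:
  fixes \<alpha>0 \<alpha>1 \<alpha>2 \<alpha>3 :: "'k::field xpoly"
  assumes "infinite (UNIV :: 'k set)"
    and "(2::'k) \<noteq> 0"
    and "m_add (m_add (m_scale \<alpha>0 A0) (m_scale \<alpha>1 A1))
               (m_add (m_scale \<alpha>2 A2) (m_scale \<alpha>3 A3)) \<in> F_alg"
  shows "strongly_central
           (m_add (m_add (m_scale \<alpha>0 A0) (m_scale \<alpha>1 A1))
                  (m_add (m_scale \<alpha>2 A2) (m_scale \<alpha>3 A3)))"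
proof -
  let ?a = "m_add (m_add (m_scale \<alpha>0 A0) (m_scale \<alpha>1 A1)) (m_add (m_scale \<alpha>2 A2) (m_scale \<alpha>3 A3))"
  have c1: "m_mul ?a C1 = m_mul C1 ?a"
    by (simp only: m_mul_add_left m_mul_add_right m_mul_scale_left m_mul_scale_right
        comm_A0_C1 comm_A1_C1 comm_A2_C1 comm_A3_C1)
  have c2: "m_mul ?a C2 = m_mul C2 ?a"
    by (simp only: m_mul_add_left m_mul_add_right m_mul_scale_left m_mul_scale_right
        comm_A0_C2 comm_A1_C2 comm_A2_C2 comm_A3_C2)
  have c12: "m_mul ?a (m_mul C1 C2) = m_mul ?a (m_mul C2 C1)"
    by (simp only: m_mul_add_left m_mul_scale_left comm12_A0 comm12_A1 comm12_A2 comm12_A3)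
  show ?thesis by (rule strongly_central_gen[OF assms(3) c1 c2 c12])
qed

end
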